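(* If $a$ and $m$ are integers with $m>0$, then $m$ divides $(a^m-a)\,(m-1)!$. *)

theory Defs
  imports Main
begin

end

theory Submission
  imports Defs "HOL-Number_Theory.Number_Theory"
begin

lemma two_dvd_prod:
  assumes "finite A" "i \<in> A" "j \<in> A" "i \<noteq> j"
  shows "(i * j :: nat) dvd \<Prod>A"
proof -
  have "\<Prod>A = i * \<Prod>(A - {i})" using assms by (simp add: prod.remove)
  also have "\<Prod>(A - {i}) = j * \<Prod>(A - {i} - {j})"
    using assms by (intro prod.remove) auto
  finally show ?thesis by simp
qed

lemma comp_dvd_fact:
  fixes m :: nat
  assumes "m > 1" "\<not> prime m" "m \<noteq> 4"
  shows "m dvd fact (m - 1)"
proof -
  obtain r where r: "r dvd m" "r \<noteq> 1" "r \<noteq> m"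
    using assms prime_nat_iff by auto
  obtain s where s: "m = r * s" using r by (auto elim: dvdE)
  have r1: "1 < r" using r assms s by (cases r) auto
  have s1: "1 < s" using r s assms by (cases s) auto
  have rm: "r < m" using s s1 r1 by simp
  have sm: "s < m" using s s1 r1 by simp
  have ff: "fact (m - 1) = (\<Prod>{1..m-1} :: nat)" by (simp add: fact_prod)
  show ?thesis
  proof (cases "r = s")
    case False
    have "r * s dvd \<Prod>{1..m-1}"
      using False r1 s1 rm sm by (intro two_dvd_prod) auto
    then show ?thesis using s ff by simp
  next
    case True
    have r2: "r \<noteq> 2" using True s assms by auto
    hence r3: "r > 2" using r1 by simp
    have "2 * r < r * r" using r3 by simp
    moreover have "m = r * r" using True s by simp
    ultimately have "2 * r < m" by simp
    hence "2 * r \<le> m - 1" "r \<le> m - 1" by linarith+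
    hence "r * (2 * r) dvd \<Prod>{1..m-1}"
      using r1 by (intro two_dvd_prod) auto
    moreover have "m dvd r * (2 * r)" using True s by simp
    ultimately show ?thesis using ff dvd_trans by metis
  qed
qed

lemma fermat_int:
  fixes a :: int and p :: nat
  assumes "prime p"
  shows "int p dvd a ^ p - a"
proof -
  have "p > 0" using assms prime_gt_0_nat by simp
  then obtain q where q: "p = Suc q" using gr0_implies_Suc by blast
  have eq: "a ^ p - a = a * (a ^ q - 1)" using q by (simp add: right_diff_distrib)
  show ?thesis
  proof (cases "int p dvd a")
    case True
    then show ?thesis unfolding eq by (rule dvd_mult2)
  next
    case False
    have pi: "prime (int p)" using assms by simp
    have "coprime (int p) a" using prime_imp_coprime[OF pi False] .
    hence cop: "coprime a (int p)" by (simp add: coprime_commute)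
    have g1: "int p > 1" using assms prime_gt_1_nat by simp
    have "residues (int p)" unfolding residues_def using g1 by simp
    then have "[a ^ totient p = 1] (mod int p)"
      using residues.euler_theorem[of "int p" a] cop by simp
    moreover have "totient p = q" using assms totient_prime q by simp
    ultimately have "[a ^ q = 1] (mod int p)" by simp
    hence "int p dvd a ^ q - 1" by (simp add: cong_iff_dvd_diff)
    then show ?thesis unfolding eq by (rule dvd_mult)
  qed
qed

theorem mainTheorem11:
  fixes a :: int and m :: nat
  assumes "m > 0"
  shows "int m dvd (a ^ m - a) * fact (m - 1)"
proof (cases "m = 1")
  case True then show ?thesis by simp
next
  case m1: False
  show ?thesis
  proof (cases "prime m")
    case True
    then show ?thesis using fermat_int by simp
  next
    case np: False
    show ?thesis
    proof (cases "m = 4")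
      case True
      have "even (a ^ 4 - a)" by (cases "even a") auto
      then obtain k where "a ^ 4 - a = 2 * k" by blast
      moreover have "fact 3 = (6::int)" by (simp add: fact_numeral)
      ultimately show ?thesis using True by simp
    next
      case False
      have "m dvd fact (m - 1)" using comp_dvd_fact np False m1 assms by simp
      hence "int m dvd int (fact (m - 1))" by (simp only: int_dvd_int_iff)
      hence "int m dvd fact (m - 1)" by (simp only: of_nat_fact)
      then show ?thesis by simp
    qed
  qed
qed

end
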